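(* Let $N,d\ge1$, $\lambda,\tau>0$, and let $\psi:[0,\infty)\to(0,\infty)$ be positive, nonincreasing, differentiable with $\psi(r)\le1$ for all $r\ge0$. Let $(x_i,v_i)_{i=1}^N$ solve $$\dot x_i(t)=v_i(t),\qquad \dot v_i(t)=\frac{\lambda}{N}\sum_{j=1}^N\psi(|x_i(t-\tau)-x_j(t-\tau)|)\,(v_j(t-\tau)-v_i(t-\tau)),\qquad t>0,$$ with initial data $(x_i,v_i)=(x_i^0,v_i^0)$ on $[-\tau,0]$, $(x_i^0,v_i^0)\in C([-\tau,0];\mathbb{R}^{2d})\cap C^1((-\tau,0);\mathbb{R}^{2d})$. Then $$\frac{d}{dt}V(t)\le 2\lambda\big(V(t)+V(t-\tau)\big)\qquad\text{for all }t>0.$$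
   Context: $V(t):=\frac12\sum_{i,j=1}^N|v_i(t)-v_j(t)|^2$ for $t\ge-\tau$. *)

theory Defs
  imports "HOL-Analysis.Analysis"
begin

definition Vfun :: "nat \<Rightarrow> (nat \<Rightarrow> real \<Rightarrow> real ^ 'd) \<Rightarrow> real \<Rightarrow> real" where
  "Vfun N v t = (1/2) * (\<Sum>i<N. \<Sum>j<N. (norm (v i t - v j t))\<^sup>2)"

end

theory Submission imports Defs begin

lemma d_normsq:
  fixes f :: "real \<Rightarrow> 'a::real_inner"
  assumes "(f has_vector_derivative f') (at t)"
  shows "((\<lambda>s. (norm (f s))\<^sup>2) has_real_derivative 2 * inner (f t) f') (at t)"
proof -
  have "((\<lambda>s. inner (f s) (f s)) has_derivative (\<lambda>h. inner (f t) (h *\<^sub>R f') + inner (h *\<^sub>R f') (f t))) (at t)"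
    using assms unfolding has_vector_derivative_def by (intro has_derivative_inner) auto
  moreover have "(\<lambda>h. inner (f t) (h *\<^sub>R f') + inner (h *\<^sub>R f') (f t)) = (*) (2 * inner (f t) f')"
    by (auto simp: inner_commute algebra_simps)
  ultimately show ?thesis
    by (simp add: has_field_derivative_def power2_norm_eq_inner)
qed

lemma young:
  fixes u a :: "'a::real_inner"
  assumes "lam > 0"
  shows "2 * inner u a \<le> lam * (norm u)\<^sup>2 + (norm a)\<^sup>2 / lam"
proof -
  have "0 \<le> (norm (lam *\<^sub>R u - a))\<^sup>2" by simp
  also have "\<dots> = lam^2 * (norm u)\<^sup>2 - 2 * lam * inner u a + (norm a)\<^sup>2"
    unfolding power2_norm_eq_inner by (simp add: inner_diff_left inner_diff_right inner_commute power2_eq_square algebra_simps)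
  finally have "2 * lam * inner u a \<le> lam * (lam * (norm u)\<^sup>2 + (norm a)\<^sup>2 / lam)"
    using assms by (simp add: algebra_simps power2_eq_square)
  thus ?thesis using assms by (simp add: mult.assoc)
qed

lemma acc_bound:
  fixes w :: "nat \<Rightarrow> 'a::real_inner"
  assumes N: "N \<ge> 1" and lam: "lam > 0" and c: "\<And>k. k < N \<Longrightarrow> 0 \<le> c k \<and> c k \<le> 1"
  shows "(norm ((lam / real N) *\<^sub>R (\<Sum>k<N. c k *\<^sub>R (w k - w i))))\<^sup>2
          \<le> lam^2 / real N * (\<Sum>k<N. (norm (w k - w i))\<^sup>2)"
proof -
  have "norm (\<Sum>k<N. c k *\<^sub>R (w k - w i)) \<le> (\<Sum>k<N. norm (c k *\<^sub>R (w k - w i)))"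
    by (rule norm_sum)
  also have "\<dots> \<le> (\<Sum>k<N. norm (w k - w i))"
    by (rule sum_mono) (use c in \<open>auto intro!: mult_left_le_one_le\<close>)
  finally have h1: "norm (\<Sum>k<N. c k *\<^sub>R (w k - w i)) \<le> (\<Sum>k<N. norm (w k - w i))" .
  have h2: "(\<Sum>k<N. norm (w k - w i))\<^sup>2 \<le> (\<Sum>k<N. (norm (w k - w i))\<^sup>2) * real N"
    using sum_squared_le_sum_of_squares[of "\<lambda>k. norm (w k - w i)" "{..<N}"] by simp
  have "(norm ((lam / real N) *\<^sub>R (\<Sum>k<N. c k *\<^sub>R (w k - w i))))\<^sup>2
       = (lam / real N)^2 * (norm (\<Sum>k<N. c k *\<^sub>R (w k - w i)))\<^sup>2"
    using lam by (simp add: power2_eq_square)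
  also have "\<dots> \<le> (lam / real N)^2 * (\<Sum>k<N. norm (w k - w i))\<^sup>2"
    by (intro mult_left_mono power_mono h1) auto
  also have "\<dots> \<le> (lam / real N)^2 * ((\<Sum>k<N. (norm (w k - w i))\<^sup>2) * real N)"
    by (intro mult_left_mono h2) auto
  also have "\<dots> = lam^2 / real N * (\<Sum>k<N. (norm (w k - w i))\<^sup>2)"
    using N by (simp add: power2_eq_square field_simps)
  finally show ?thesis .
qed

lemma main_ineq:
  fixes u a w :: "nat \<Rightarrow> 'a::real_inner"
  assumes N: "N \<ge> 1" and lam: "lam > 0"
    and abd: "\<And>i. i < N \<Longrightarrow> (norm (a i))\<^sup>2 \<le> lam^2 / real N * (\<Sum>k<N. (norm (w k - w i))\<^sup>2)"
  shows "(\<Sum>i<N. \<Sum>j<N. inner (u i - u j) (a i - a j))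
     \<le> 2 * lam * ((1/2) * (\<Sum>i<N. \<Sum>j<N. (norm (u i - u j))\<^sup>2) + (1/2) * (\<Sum>i<N. \<Sum>j<N. (norm (w i - w j))\<^sup>2))"
proof -
  have sw: "(\<Sum>i<N. \<Sum>j<N. inner (u i - u j) (a j)) = - (\<Sum>i<N. \<Sum>j<N. inner (u i - u j) (a i))"
  proof -
    have "(\<Sum>i<N. \<Sum>j<N. inner (u i - u j) (a j)) = (\<Sum>j<N. \<Sum>i<N. inner (u i - u j) (a j))"
      by (rule sum.swap)
    also have "\<dots> = (\<Sum>i<N. \<Sum>j<N. - inner (u i - u j) (a i))"
      by (intro sum.cong refl) (simp add: inner_diff_left)
    finally show ?thesis by (simp add: sum_negf)
  qed
  have "(\<Sum>i<N. \<Sum>j<N. inner (u i - u j) (a i - a j))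
      = (\<Sum>i<N. \<Sum>j<N. inner (u i - u j) (a i)) - (\<Sum>i<N. \<Sum>j<N. inner (u i - u j) (a j))"
    by (simp add: inner_diff_right sum_subtractf)
  also have "\<dots> = (\<Sum>i<N. \<Sum>j<N. 2 * inner (u i - u j) (a i))"
    by (simp add: sw sum_distrib_left[symmetric])
  also have "\<dots> \<le> (\<Sum>i<N. \<Sum>j<N. lam * (norm (u i - u j))\<^sup>2 + (norm (a i))\<^sup>2 / lam)"
    by (intro sum_mono young lam)
  also have "\<dots> = lam * (\<Sum>i<N. \<Sum>j<N. (norm (u i - u j))\<^sup>2) + real N / lam * (\<Sum>i<N. (norm (a i))\<^sup>2)"
    by (simp add: sum.distrib sum_distrib_left sum_divide_distrib)
  also have "\<dots> \<le> lam * (\<Sum>i<N. \<Sum>j<N. (norm (u i - u j))\<^sup>2) + real N / lam * (\<Sum>i<N. lam^2 / real N * (\<Sum>k<N. (norm (w k - w i))\<^sup>2))"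
    using lam by (intro add_left_mono mult_left_mono sum_mono abd) auto
  also have "(\<Sum>i<N. lam^2 / real N * (\<Sum>k<N. (norm (w k - w i))\<^sup>2)) = lam^2 / real N * (\<Sum>i<N. \<Sum>j<N. (norm (w i - w j))\<^sup>2)"
    by (simp add: sum_distrib_left[symmetric] norm_minus_commute sum_divide_distrib[symmetric])
  also have "lam * (\<Sum>i<N. \<Sum>j<N. (norm (u i - u j))\<^sup>2) + real N / lam * (lam^2 / real N * (\<Sum>i<N. \<Sum>j<N. (norm (w i - w j))\<^sup>2))
     = 2 * lam * ((1/2) * (\<Sum>i<N. \<Sum>j<N. (norm (u i - u j))\<^sup>2) + (1/2) * (\<Sum>i<N. \<Sum>j<N. (norm (w i - w j))\<^sup>2))"
    using N lam by (simp add: field_simps power2_eq_square)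
  finally show ?thesis .
qed

theorem lemma3p3:
  fixes N :: nat and lam \<tau> :: real and \<psi> :: "real \<Rightarrow> real"
    and x v :: "nat \<Rightarrow> real \<Rightarrow> real ^ 'd"
  assumes N: "N \<ge> 1"
    and lam_pos: "lam > 0" and tau: "\<tau> > 0"
    and psi_pos: "\<forall>r\<ge>0. \<psi> r > 0"
    and psi_le1: "\<forall>r\<ge>0. \<psi> r \<le> 1"
    and psi_mono: "\<forall>r s. 0 \<le> r \<and> r \<le> s \<longrightarrow> \<psi> s \<le> \<psi> r"
    and psi_diff: "\<forall>r\<ge>0. \<psi> differentiable (at r within {0..})"
    and cont_x: "\<forall>i<N. continuous_on {-\<tau>..} (x i)"
    and cont_v: "\<forall>i<N. continuous_on {-\<tau>..} (v i)"
    and init_C1: "\<forall>i<N. \<exists>x' v'. continuous_on {-\<tau><..<0} x' \<and> continuous_on {-\<tau><..<0} v' \<and>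
        (\<forall>t\<in>{-\<tau><..<0}. (x i has_vector_derivative x' t) (at t) \<and>
                             (v i has_vector_derivative v' t) (at t))"
    and ode_x: "\<forall>i<N. \<forall>t>0. (x i has_vector_derivative v i t) (at t)"
    and ode_v: "\<forall>i<N. \<forall>t>0. (v i has_vector_derivative
        ((lam / real N) *\<^sub>R (\<Sum>j<N. \<psi> (norm (x i (t - \<tau>) - x j (t - \<tau>))) *\<^sub>R
                                   (v j (t - \<tau>) - v i (t - \<tau>))))) (at t)"
  shows "\<forall>t>0. \<exists>D. (Vfun N v has_real_derivative D) (at t) \<and>
                   D \<le> 2 * lam * (Vfun N v t + Vfun N v (t - \<tau>))"
proof (intro allI impI)
  fix t :: real assume t: "t > 0"
  define a where "a i = (lam / real N) *\<^sub>R (\<Sum>j<N. \<psi> (norm (x i (t - \<tau>) - x j (t - \<tau>))) *\<^sub>R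
                                   (v j (t - \<tau>) - v i (t - \<tau>)))" for i
  have dv: "\<And>i. i < N \<Longrightarrow> (v i has_vector_derivative a i) (at t)"
    using ode_v t unfolding a_def by blast
  have dV: "(Vfun N v has_real_derivative
      (1/2) * (\<Sum>i<N. \<Sum>j<N. 2 * inner (v i t - v j t) (a i - a j))) (at t)"
    unfolding Vfun_def
    by (intro DERIV_cmult DERIV_sum d_normsq has_vector_derivative_diff dv) auto
  have "(\<Sum>i<N. \<Sum>j<N. inner (v i t - v j t) (a i - a j))
     \<le> 2 * lam * ((1/2) * (\<Sum>i<N. \<Sum>j<N. (norm (v i t - v j t))\<^sup>2) + (1/2) * (\<Sum>i<N. \<Sum>j<N. (norm (v i (t - \<tau>) - v j (t - \<tau>)))\<^sup>2))"
  proof (rule main_ineq[OF N lam_pos])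
    fix i assume i: "i < N"
    show "(norm (a i))\<^sup>2 \<le> lam\<^sup>2 / real N * (\<Sum>k<N. (norm (v k (t - \<tau>) - v i (t - \<tau>)))\<^sup>2)"
      unfolding a_def
      by (rule acc_bound[OF N lam_pos]) (use psi_pos psi_le1 in \<open>auto simp: less_imp_le\<close>)
  qed
  moreover have "(1/2) * (\<Sum>i<N. \<Sum>j<N. 2 * inner (v i t - v j t) (a i - a j))
      = (\<Sum>i<N. \<Sum>j<N. inner (v i t - v j t) (a i - a j))"
    by (simp add: sum_distrib_left[symmetric])
  ultimately show "\<exists>D. (Vfun N v has_real_derivative D) (at t) \<and>
                   D \<le> 2 * lam * (Vfun N v t + Vfun N v (t - \<tau>))"
    using dV unfolding Vfun_def by (intro exI[of _ "(1/2) * (\<Sum>i<N. \<Sum>j<N. 2 * inner (v i t - v j t) (a i - a j))"]) auto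
qed

end
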